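(* Let $d\ge1$, $D>0$, $\sigma\ge0$, $\alpha\in[0,1)$, $\rho>0$, and let $T$ be an even positive integer. Let $w^*\in\mathbb{R}^d$ with $\|w^*\|\le D$, and let $(x,\epsilon,b)$ be mutually independent random variables with $x\in\mathbb{R}^d$, $\|x\|\le1$ a.s., $\Sigma:=\mathbb{E}[(x-\mathbb{E}x)(x-\mathbb{E}x)^T]\succeq\rho I$, $\epsilon\in\mathbb{R}$, $|\epsilon|\le\sigma$ a.s., $\mathbb{E}\epsilon=0$, $b\in\mathbb{R}$, $\mathbb{P}(b\ne0)=\alpha$; set $y=\langle w^*,x\rangle+\epsilon+b$. Let $R=6D+\sigma$, $\lambda=(1-\alpha)\rho$, $C=\frac{(1-\alpha)\rho}{2}$. Run the following algorithm on $2T$ i.i.d. samples distributed as $(x,y)$: Phase 1: draw $(z_i,y_i)_{i=1}^T$ and set $\mu=\frac1T\sum_{i=1}^Tz_i$; Phase 2: $w_1=0$, and for $t=1,\dots,T$ draw a fresh sample $(x_t,y_t)$, set $\eta_t=\frac1{\lambda t}$, $g_t=\phi_R(\langle w_t,x_t-\mu\rangle-y_t)(x_t-\mu)$, $w_{t+1}=\Pi_{\mathcal W}(w_t-\eta_tg_t)$; output $\bar w=\frac2T\sum_{t=T/2+1}^Tw_t$. With this (random) $\mu$, define, for $w\in\mathbb{R}^d$, with $(x,\epsilon,b)$ an independent copy, $$L_R(w)=\mathbb{E}_{x,\epsilon,b}\big[h_R(\langle w-w^*,x-\mu\rangle-\langle w^*,\mu\rangle-\epsilon-b)\big],\quad \tilde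 L_R(w)=\mathbb{E}_{x,\epsilon,b}\big[h_R(\langle w-w^*,x-\mathbb{E}x\rangle-\langle w^*,\mu\rangle-\epsilon-b)\big].$$ Then, with the outer expectation over all $2T$ samples, $$\mathbb{E}\big[\tilde L_R(\bar w)-L_R(\bar w)\big]\le\frac C2\,\mathbb{E}\|\bar w-w^*\|^2+\frac{2R^2}{C}\cdot\frac{36\log T+4}{T}.$$
   Context: $\mathcal W=\{w\in\mathbb{R}^d:\|w\|\le D\}$, $\Pi_{\mathcal W}$ is the Euclidean projection onto $\mathcal W$. The Huber loss is $h_R(s)=\frac12s^2$ if $|s|\le R$ and $h_R(s)=R(|s|-\frac12R)$ otherwise, and $\phi_R(s)=\min\{R,\max\{s,-R\}\}$ is its derivative. *)

theory Defs
  imports "HOL-Probability.Probability"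
begin

text \<open>Huber loss h_R and its derivative phi_R (clipping to [-R,R]).\<close>
definition huber :: "real \<Rightarrow> real \<Rightarrow> real" where
  "huber R s = (if \<bar>s\<bar> \<le> R then s\<^sup>2 / 2 else R * (\<bar>s\<bar> - R / 2))"

definition clip :: "real \<Rightarrow> real \<Rightarrow> real" where
  "clip R s = min R (max s (- R))"

text \<open>Positive semidefiniteness of a square matrix (Loewner order A >= B iff psd (A - B)).\<close>
definition psd :: "real^'n^'n \<Rightarrow> bool" where
  "psd A \<longleftrightarrow> (\<forall>v. 0 \<le> v \<bullet> (A *v v))"

definition covariance_matrix :: "'w measure \<Rightarrow> ('w \<Rightarrow> real^'n) \<Rightarrow> real^'n^'n" where
  "covariance_matrix M X =
     (\<chi> i j. integral\<^sup>L M (\<lambda>\<omega>. (X \<omega> - integral\<^sup>L M X) $ i * (X \<omega> - integral\<^sup>L M X) $ j))"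

text \<open>Phase-2 projected SGD iterates:
  sgd_iter D R lam mu xs k = w_(k+1), with w_1 = 0 and step t = k+1 using sample xs t.\<close>
primrec sgd_iter :: "real \<Rightarrow> real \<Rightarrow> real \<Rightarrow> 'a::euclidean_space \<Rightarrow> (nat \<Rightarrow> 'a \<times> real) \<Rightarrow> nat \<Rightarrow> 'a" where
  "sgd_iter D R lam mu xs 0 = 0"
| "sgd_iter D R lam mu xs (Suc k) =
     (let w = sgd_iter D R lam mu xs k; t = Suc k; xt = fst (xs t); yt = snd (xs t);
          g = clip R (w \<bullet> (xt - mu) - yt) *\<^sub>R (xt - mu)
      in closest_point (cball 0 D) (w - (1 / (lam * real t)) *\<^sub>R g))"

end

theory Submission
  imports Defs
begin

lemma huber_lip:
  assumes "R \<ge> 0" shows "\<bar>huber R a - huber R b\<bar> \<le> R * \<bar>a - b\<bar>"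
proof -
  have key: "huber R a - huber R b \<le> R * \<bar>a - b\<bar>" if "R \<ge> 0" for a b
  proof -
    consider "\<bar>a\<bar> \<le> R" "\<bar>b\<bar> \<le> R" | "\<bar>a\<bar> \<le> R" "\<bar>b\<bar> > R" | "\<bar>a\<bar> > R" "\<bar>b\<bar> \<le> R" | "\<bar>a\<bar> > R" "\<bar>b\<bar> > R" by linarith
    then show ?thesis
    proof cases
      case 1
      have "a\<^sup>2/2 - b\<^sup>2/2 = (a-b)*(a+b)/2" by (simp add: power2_eq_square algebra_simps)
      also have "\<dots> \<le> \<bar>a-b\<bar>*\<bar>a+b\<bar>/2" by (simp add: abs_mult[symmetric])
      also have "\<dots> \<le> \<bar>a-b\<bar>*(2*R)/2" using 1 by (intro divide_right_mono mult_left_mono) auto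
      finally show ?thesis using 1 by (simp add: huber_def mult.commute)
    next
      case 2
      have "a\<^sup>2/2 - R*(\<bar>b\<bar> - R/2) = -((\<bar>b\<bar>-R)*R) - (R - \<bar>a\<bar>)*(R+\<bar>a\<bar>)/2 + 0" by (simp add: power2_eq_square field_simps)
      moreover have "(R - \<bar>a\<bar>)*(R+\<bar>a\<bar>) \<ge> 0" using 2 by simp
      moreover have "(\<bar>b\<bar>-R)*R \<ge> 0" using 2 that by simp
      ultimately have "a\<^sup>2/2 - R*(\<bar>b\<bar> - R/2) \<le> 0" by linarith
      moreover have "0 \<le> R * \<bar>a - b\<bar>" using that by simp
      ultimately have "a\<^sup>2/2 - R*(\<bar>b\<bar> - R/2) \<le> R * \<bar>a - b\<bar>" by linarith
      then show ?thesis using 2 by (simp add: huber_def)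
    next
      case 3
      have "R*(\<bar>a\<bar> - R/2) - b\<^sup>2/2 = R*(\<bar>a\<bar> - \<bar>b\<bar>) - (R - \<bar>b\<bar>)^2/2" by (simp add: power2_eq_square field_simps)
      also have "\<dots> \<le> R*(\<bar>a\<bar> - \<bar>b\<bar>)" by simp
      also have "\<dots> \<le> R*\<bar>a - b\<bar>" using that by (intro mult_left_mono) auto
      finally show ?thesis using 3 by (simp add: huber_def)
    next
      case 4
      have "R*(\<bar>a\<bar> - R/2) - R*(\<bar>b\<bar> - R/2) = R*(\<bar>a\<bar> - \<bar>b\<bar>)" by (simp add: algebra_simps)
      also have "\<dots> \<le> R*\<bar>a - b\<bar>" using that by (intro mult_left_mono) auto
      finally show ?thesis using 4 by (simp add: huber_def)
    qed
  qed
  show ?thesis using key[OF assms, of a b] key[OF assms, of b a] by (simp add: abs_minus_commute)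
qed

lemma huber_meas[measurable]: "huber R \<in> borel_measurable borel"
  unfolding huber_def[abs_def] by measurable

lemma clip_meas[measurable]: "clip R \<in> borel_measurable borel"
  unfolding clip_def[abs_def] by measurable

lemma huber_int_diff:
  assumes "prob_space M" "f \<in> borel_measurable M" "R \<ge> 0"
  shows "\<bar>(\<integral>\<omega>. huber R (f \<omega> + \<delta>) \<partial>M) - (\<integral>\<omega>. huber R (f \<omega>) \<partial>M)\<bar> \<le> R * \<bar>\<delta>\<bar>"
proof -
  interpret prob_space M by fact
  define g where "g \<omega> = huber R (f \<omega> + \<delta>) - huber R (f \<omega>)" for \<omega>
  have gb: "\<bar>g \<omega>\<bar> \<le> R * \<bar>\<delta>\<bar>" for \<omega> unfolding g_def using huber_lip[OF assms(3), of "f \<omega> + \<delta>" "f \<omega>"] by simp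
  have gm: "g \<in> borel_measurable M" unfolding g_def using assms(2) by measurable
  have gi: "integrable M g" using gb gm by (intro integrable_const_bound[where B="R*\<bar>\<delta>\<bar>"]) auto
  show ?thesis
  proof (cases "integrable M (\<lambda>\<omega>. huber R (f \<omega>))")
    case True
    have e: "(\<lambda>\<omega>. huber R (f \<omega> + \<delta>)) = (\<lambda>\<omega>. g \<omega> + huber R (f \<omega>))" by (auto simp: g_def)
    have "(\<integral>\<omega>. huber R (f \<omega> + \<delta>) \<partial>M) - (\<integral>\<omega>. huber R (f \<omega>) \<partial>M) = integral\<^sup>L M g"
      unfolding e using gi True by simp
    also have "\<bar>\<dots>\<bar> \<le> R * \<bar>\<delta>\<bar>"
    proof -
      have "\<bar>integral\<^sup>L M g\<bar> \<le> (\<integral>x. \<bar>g x\<bar> \<partial>M)" by (rule integral_abs_bound)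
      moreover have "(\<integral>x. \<bar>g x\<bar> \<partial>M) \<le> (\<integral>x. R * \<bar>\<delta>\<bar> \<partial>M)"
        using gi gb by (intro integral_mono) auto
      moreover have "(\<integral>x. R * \<bar>\<delta>\<bar> \<partial>M) = R * \<bar>\<delta>\<bar>" by (simp add: prob_space)
      ultimately show ?thesis by linarith
    qed
    finally show ?thesis .
  next
    case False
    have "\<not> integrable M (\<lambda>\<omega>. huber R (f \<omega> + \<delta>))"
    proof
      assume "integrable M (\<lambda>\<omega>. huber R (f \<omega> + \<delta>))"
      then have "integrable M (\<lambda>\<omega>. huber R (f \<omega> + \<delta>) - g \<omega>)" using gi by simp
      then show False using False by (simp add: g_def)
    qed
    then show ?thesis using False assms by (simp add: not_integrable_integral_eq)
  qed
qed

lemma sgd_norm: "D \<ge> 0 \<Longrightarrow> norm (sgd_iter D R lam mu xs k :: 'a::euclidean_space) \<le> D"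
proof (induction k)
  case 0 then show ?case by simp
next
  case (Suc k)
  have "closest_point (cball 0 D) v \<in> cball (0::'a) D" for v
    using Suc.prems by (intro closest_point_in_set) auto
  then show ?case by (simp add: Let_def)
qed


lemma closest_cball_meas[measurable]:
  "closest_point (cball (0::'a::euclidean_space) D) \<in> borel_measurable borel"
proof (cases "D < 0")
  case True
  then have "closest_point (cball (0::'a) D) = (\<lambda>_. SOME x. False)" by (auto simp: closest_point_def fun_eq_iff)
  then show ?thesis by simp
next
  case False
  then show ?thesis
    by (intro borel_measurable_continuous_onI continuous_on_closest_point) auto
qed

lemma fst_borel: "fst \<in> borel_measurable (borel :: ('a::second_countable_topology \<times> 'b::second_countable_topology) measure)"
  by (metis borel_prod measurable_fst)
lemma snd_borel: "snd \<in> borel_measurable (borel :: ('a::second_countable_topology \<times> 'b::second_countable_topology) measure)"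
  by (metis borel_prod measurable_snd)

lemma sgd_meas:
  fixes xs :: "'s \<Rightarrow> nat \<Rightarrow> 'a::euclidean_space \<times> real"
  assumes xm: "\<And>t. 1 \<le> t \<Longrightarrow> t \<le> K \<Longrightarrow> (\<lambda>s. xs s t) \<in> borel_measurable Q"
    and mm: "m \<in> borel_measurable Q"
  shows "k \<le> K \<Longrightarrow> (\<lambda>s. sgd_iter D R lam (m s) (xs s) k) \<in> borel_measurable Q"
proof (induction k)
  case 0 then show ?case by simp
next
  case (Suc k)
  have ih: "(\<lambda>s. sgd_iter D R lam (m s) (xs s) k) \<in> borel_measurable Q" using Suc by simp
  have x: "(\<lambda>s. xs s (Suc k)) \<in> borel_measurable Q" using Suc by (intro xm) auto
  have x1: "(\<lambda>s. fst (xs s (Suc k))) \<in> borel_measurable Q" using measurable_compose[OF x fst_borel] by simp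
  have x2: "(\<lambda>s. snd (xs s (Suc k))) \<in> borel_measurable Q" using measurable_compose[OF x snd_borel] by simp
  show ?case unfolding sgd_iter.simps Let_def using ih x1 x2 mm by measurable
qed


lemma prod_two:
  fixes g h :: "'a \<Rightarrow> real"
  assumes P: "prob_space P" and I: "finite I" "i \<in> I" "j \<in> I" "i \<noteq> j"
    and g: "integrable P g" and h: "integrable P h"
  shows "integrable (PiM I (\<lambda>_. P)) (\<lambda>s. g (s i) * h (s j))"
    "(\<integral>s. g (s i) * h (s j) \<partial>PiM I (\<lambda>_. P)) = integral\<^sup>L P g * integral\<^sup>L P h"
proof -
  interpret prob_space P by fact
  interpret product_sigma_finite "\<lambda>_. P" by unfold_locales
  define f where "f k = (if k = i then g else if k = j then h else (\<lambda>_. 1))" for k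
  have fi: "integrable P (f k)" for k using g h by (auto simp: f_def)
  have e: "(\<Prod>k\<in>I. f k (s k)) = g (s i) * h (s j)" for s
  proof -
    have "(\<Prod>k\<in>I. f k (s k)) = f i (s i) * (\<Prod>k\<in>I - {i}. f k (s k))"
      using I by (simp add: prod.remove)
    also have "(\<Prod>k\<in>I - {i}. f k (s k)) = f j (s j) * (\<Prod>k\<in>I - {i} - {j}. f k (s k))"
      using I by (intro prod.remove) auto
    also have "(\<Prod>k\<in>I - {i} - {j}. f k (s k)) = 1" by (intro prod.neutral) (auto simp: f_def)
    finally show ?thesis using I by (simp add: f_def)
  qed
  have e2: "(\<Prod>k\<in>I. integral\<^sup>L P (f k)) = integral\<^sup>L P g * integral\<^sup>L P h"
  proof -
    have "(\<Prod>k\<in>I. integral\<^sup>L P (f k)) = integral\<^sup>L P (f i) * (\<Prod>k\<in>I - {i}. integral\<^sup>L P (f k))"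
      using I by (simp add: prod.remove)
    also have "(\<Prod>k\<in>I - {i}. integral\<^sup>L P (f k)) = integral\<^sup>L P (f j) * (\<Prod>k\<in>I - {i} - {j}. integral\<^sup>L P (f k))"
      using I by (intro prod.remove) auto
    also have "(\<Prod>k\<in>I - {i} - {j}. integral\<^sup>L P (f k)) = 1" by (intro prod.neutral) (auto simp: f_def prob_space)
    finally show ?thesis using I by (simp add: f_def)
  qed
  show "integrable (PiM I (\<lambda>_. P)) (\<lambda>s. g (s i) * h (s j))"
    using product_integrable_prod[of I f] I fi unfolding e by simp
  show "(\<integral>s. g (s i) * h (s j) \<partial>PiM I (\<lambda>_. P)) = integral\<^sup>L P g * integral\<^sup>L P h"
    using product_integral_prod[of I f] I fi unfolding e e2 by simp
qed

lemma prod_one: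
  fixes g :: "'a \<Rightarrow> real"
  assumes P: "prob_space P" and I: "finite I" "i \<in> I" 
    and g: "integrable P g"
  shows "integrable (PiM I (\<lambda>_. P)) (\<lambda>s. g (s i))"
    "(\<integral>s. g (s i) \<partial>PiM I (\<lambda>_. P)) = integral\<^sup>L P g"
proof -
  interpret prob_space P by fact
  interpret product_sigma_finite "\<lambda>_. P" by unfold_locales
  define f where "f k = (if k = i then g else (\<lambda>_. 1))" for k
  have fi: "integrable P (f k)" for k using g by (auto simp: f_def)
  have e: "(\<Prod>k\<in>I. f k (s k)) = g (s i)" for s
  proof -
    have "(\<Prod>k\<in>I. f k (s k)) = f i (s i) * (\<Prod>k\<in>I - {i}. f k (s k))"
      using I by (simp add: prod.remove)
    also have "(\<Prod>k\<in>I - {i}. f k (s k)) = 1" by (intro prod.neutral) (auto simp: f_def)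
    finally show ?thesis using I by (simp add: f_def)
  qed
  have e2: "(\<Prod>k\<in>I. integral\<^sup>L P (f k)) = integral\<^sup>L P g"
  proof -
    have "(\<Prod>k\<in>I. integral\<^sup>L P (f k)) = integral\<^sup>L P (f i) * (\<Prod>k\<in>I - {i}. integral\<^sup>L P (f k))"
      using I by (simp add: prod.remove)
    also have "(\<Prod>k\<in>I - {i}. integral\<^sup>L P (f k)) = 1" by (intro prod.neutral) (auto simp: f_def prob_space)
    finally show ?thesis using I by (simp add: f_def)
  qed
  show "integrable (PiM I (\<lambda>_. P)) (\<lambda>s. g (s i))"
    using product_integrable_prod[of I f] I fi unfolding e by simp
  show "(\<integral>s. g (s i) \<partial>PiM I (\<lambda>_. P)) = integral\<^sup>L P g"
    using product_integral_prod[of I f] I fi unfolding e e2 by simp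
qed


lemma var_bound:
  fixes P :: "((real^'n::finite) \<times> real) measure"
  assumes P: "prob_space P" and sP: "sets P = sets borel"
    and bd: "AE z in P. norm (fst z) \<le> 1"
    and m0: "m0 = integral\<^sup>L P fst"
    and T: "0 < T" "T \<le> N"
  shows "integrable (PiM {..<N} (\<lambda>_. P)) (\<lambda>s. (norm ((1/real T) *\<^sub>R (\<Sum>i<T. fst (s i)) - m0))\<^sup>2)"
    "(\<integral>s. (norm ((1/real T) *\<^sub>R (\<Sum>i<T. fst (s i)) - m0))\<^sup>2 \<partial>PiM {..<N} (\<lambda>_. P)) \<le> 4 / real T"
proof -
  interpret prob_space P by fact
  let ?Q = "PiM {..<N} (\<lambda>_. P)"
  have fm: "fst \<in> borel_measurable P" using fst_borel measurable_cong_sets[OF sP refl] by blast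
  have fi: "integrable P fst" using bd fm by (intro integrable_const_bound[where B=1]) auto
  have nm0: "norm m0 \<le> 1"
  proof -
    have "norm m0 \<le> (\<integral>z. norm (fst z) \<partial>P)" unfolding m0 by (rule integral_norm_bound)
    also have "\<dots> \<le> (\<integral>z. 1 \<partial>P)" using bd fi by (intro integral_mono_AE) auto
    finally show ?thesis by (simp add: prob_space)
  qed
  define gc where "gc c (z::(real^'n) \<times> real) = (fst z - m0) $ c" for c z
  have gc_eq: "gc c = (\<lambda>z. (fst z - m0) \<bullet> axis c 1)" for c by (auto simp: gc_def cart_eq_inner_axis fun_eq_iff)
  have gci: "integrable P (gc c)" for c unfolding gc_eq using fi by auto
  have gc0: "integral\<^sup>L P (gc c) = 0" for c
  proof -
    have "integral\<^sup>L P (gc c) = (\<integral>z. fst z - m0 \<partial>P) \<bullet> axis c 1" unfolding gc_eq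
      using fi by (intro integral_inner_left) auto
    also have "(\<integral>z. fst z - m0 \<partial>P) = 0" using fi by (simp add: m0 prob_space)
    finally show ?thesis by simp
  qed
  define gd where "gd (z::(real^'n) \<times> real) = (norm (fst z - m0))\<^sup>2" for z
  have gdm: "gd \<in> borel_measurable P" unfolding gd_def using fm by measurable
  have gdb: "AE z in P. norm (gd z) \<le> 4"
    using bd
  proof eventually_elim
    case (elim z)
    have "norm (fst z - m0) \<le> 2" using norm_triangle_ineq4[of "fst z" m0] elim nm0 by linarith
    then have "(norm (fst z - m0))\<^sup>2 \<le> 2\<^sup>2" by (intro power_mono) auto
    then show ?case by (simp add: gd_def)
  qed
  have gdi: "integrable P gd" using gdb gdm by (intro integrable_const_bound[where B=4]) auto
  have gd4: "integral\<^sup>L P gd \<le> 4"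
  proof -
    have "integral\<^sup>L P gd \<le> (\<integral>z. 4 \<partial>P)" using gdb gdi by (intro integral_mono_AE) auto
    then show ?thesis by (simp add: prob_space)
  qed
  define H where "H i j s = (fst (s i) - m0) \<bullet> (fst (s j) - m0)" for i j and s :: "nat \<Rightarrow> (real^'n) \<times> real"
  have Hd: "H i i s = gd (s i)" for i s by (simp add: H_def gd_def dot_square_norm)
  have Ho: "H i j s = (\<Sum>c\<in>UNIV. gc c (s i) * gc c (s j))" for i j s by (simp add: H_def gc_def inner_vec_def)
  have Hi: "integrable ?Q (H i j)" and HI: "integral\<^sup>L ?Q (H i j) = (if i = j then integral\<^sup>L P gd else 0)"
    if "i < N" "j < N" for i j
  proof -
    have "integrable ?Q (H i j) \<and> integral\<^sup>L ?Q (H i j) = (if i = j then integral\<^sup>L P gd else 0)"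
    proof (cases "i = j")
      case True
      have "H i j = (\<lambda>s. gd (s i))" using True Hd by auto
      then show ?thesis using prod_one[OF P _ _ gdi, of "{..<N}" i] that True by simp
    next
      case False
      have "integrable ?Q (\<lambda>s. gc c (s i) * gc c (s j))" for c
        using prod_two[OF P _ _ _ False gci gci, of "{..<N}"] that by simp
      moreover have "(\<integral>s. gc c (s i) * gc c (s j) \<partial>?Q) = 0" for c
        using prod_two[OF P _ _ _ False gci gci, of "{..<N}"] that gc0 by simp
      moreover have "H i j = (\<lambda>s. \<Sum>c\<in>UNIV. gc c (s i) * gc c (s j))" using Ho by auto
      ultimately show ?thesis using False by simp
    qed
    then show "integrable ?Q (H i j)" "integral\<^sup>L ?Q (H i j) = (if i = j then integral\<^sup>L P gd else 0)" by auto
  qed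
  have expand: "(norm ((1/real T) *\<^sub>R (\<Sum>i<T. fst (s i)) - m0))\<^sup>2 = (1 / (real T)\<^sup>2) * (\<Sum>i<T. \<Sum>j<T. H i j s)" for s
  proof -
    have "(1/real T) *\<^sub>R (\<Sum>i<T. fst (s i)) - m0 = (1/real T) *\<^sub>R (\<Sum>i<T. fst (s i) - m0)"
      using T by (simp add: sum_subtractf scaleR_diff_right sum_constant_scaleR del: sum_constant)
    then have "(norm ((1/real T) *\<^sub>R (\<Sum>i<T. fst (s i)) - m0))\<^sup>2
       = ((1/real T) *\<^sub>R (\<Sum>i<T. fst (s i) - m0)) \<bullet> ((1/real T) *\<^sub>R (\<Sum>i<T. fst (s i) - m0))"
      by (simp add: dot_square_norm)
    also have "\<dots> = (1 / (real T)\<^sup>2) * (\<Sum>i<T. \<Sum>j<T. H i j s)"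
      by (simp add: H_def inner_sum_left inner_sum_right power2_eq_square sum_divide_distrib[symmetric] inner_commute)
    finally show ?thesis .
  qed
  have sumi: "integrable ?Q (\<lambda>s. \<Sum>i<T. \<Sum>j<T. H i j s)" 
  proof (intro Bochner_Integration.integrable_sum)
    fix i j assume "i \<in> {..<T}" "j \<in> {..<T}"
    then show "integrable ?Q (H i j)" using T by (intro Hi) auto
  qed
  show "integrable ?Q (\<lambda>s. (norm ((1/real T) *\<^sub>R (\<Sum>i<T. fst (s i)) - m0))\<^sup>2)"
    unfolding expand using sumi by simp
  have "(\<integral>s. (\<Sum>i<T. \<Sum>j<T. H i j s) \<partial>?Q) = (\<Sum>i<T. \<Sum>j<T. integral\<^sup>L ?Q (H i j))"
  proof -
    have ii: "i < T \<Longrightarrow> j < T \<Longrightarrow> integrable ?Q (H i j)" for i j using T by (intro Hi) auto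
    have "(\<integral>s. (\<Sum>i<T. \<Sum>j<T. H i j s) \<partial>?Q) = (\<Sum>i<T. (\<integral>s. (\<Sum>j<T. H i j s) \<partial>?Q))"
      using ii by (intro Bochner_Integration.integral_sum Bochner_Integration.integrable_sum) auto
    also have "\<dots> = (\<Sum>i<T. \<Sum>j<T. integral\<^sup>L ?Q (H i j))"
      using ii by (intro sum.cong refl Bochner_Integration.integral_sum) auto
    finally show ?thesis .
  qed
  also have "\<dots> = (\<Sum>i<T. integral\<^sup>L P gd)" using HI T by (simp add: sum.delta)
  also have "\<dots> \<le> real T * 4" using gd4 by (simp add: mult_left_mono)
  finally have S: "(\<integral>s. (\<Sum>i<T. \<Sum>j<T. H i j s) \<partial>?Q) \<le> real T * 4" .
  have "(\<integral>s. (norm ((1/real T) *\<^sub>R (\<Sum>i<T. fst (s i)) - m0))\<^sup>2 \<partial>?Q)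
      = (1 / (real T)\<^sup>2) * (\<integral>s. (\<Sum>i<T. \<Sum>j<T. H i j s) \<partial>?Q)" unfolding expand by simp
  also have "\<dots> \<le> (1 / (real T)\<^sup>2) * (real T * 4)" using S by (intro mult_left_mono) auto
  also have "\<dots> = 4 / real T" using T by (simp add: power2_eq_square)
  finally show "(\<integral>s. (norm ((1/real T) *\<^sub>R (\<Sum>i<T. fst (s i)) - m0))\<^sup>2 \<partial>?Q) \<le> 4 / real T" .
qed

lemma AE_fst_distr:
  fixes g :: "'w \<Rightarrow> ('a::{second_countable_topology, real_normed_vector}) \<times> ('b::second_countable_topology)"
  assumes gm: "g \<in> borel_measurable M" and ae: "AE x in M. norm (fst (g x)) \<le> 1"
  shows "AE z in distr M borel g. norm (fst z) \<le> 1"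
proof -
  have h: "(\<lambda>x::'a \<times> 'b. norm (fst x)) \<in> borel_measurable borel"
    using measurable_compose[OF fst_borel borel_measurable_norm] by (simp add: o_def)
  have eq: "{x \<in> space borel. norm (fst x) \<le> (1::real)} = (\<lambda>x::'a \<times> 'b. norm (fst x)) -` {..1} \<inter> space borel" by auto
  have s: "{x \<in> space borel. norm (fst x) \<le> (1::real)} \<in> sets (borel :: ('a \<times> 'b) measure)"
    unfolding eq by (rule measurable_sets[OF h]) simp
  show ?thesis using ae by (subst AE_distr_iff[OF gm s]) 
qed

theorem lemma9:
  fixes M :: "'w measure"
    and X :: "'w \<Rightarrow> real^'n" and Eps B :: "'w \<Rightarrow> real"
    and wstar :: "real^'n"
    and D \<sigma> \<alpha> \<rho> :: real and T :: nat
  assumes "prob_space M"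
    and "D > 0" and "\<sigma> \<ge> 0" and "0 \<le> \<alpha>" and "\<alpha> < 1" and "\<rho> > 0"
    and "T > 0" and "even T"
    and "norm wstar \<le> D"
    and "X \<in> borel_measurable M" and "Eps \<in> borel_measurable M" and "B \<in> borel_measurable M"
    and "prob_space.indep_sets M
           (\<lambda>i::nat. if i = 0 then {X -` A \<inter> space M | A. A \<in> sets borel}
                    else if i = 1 then {Eps -` A \<inter> space M | A. A \<in> sets borel}
                    else {B -` A \<inter> space M | A. A \<in> sets borel}) {0, 1, 2}"
    and "AE \<omega> in M. norm (X \<omega>) \<le> 1"
    and "psd (covariance_matrix M X - \<rho> *\<^sub>R mat 1)"
    and "AE \<omega> in M. \<bar>Eps \<omega>\<bar> \<le> \<sigma>"
    and "integral\<^sup>L M Eps = 0"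
    and "measure M {\<omega> \<in> space M. B \<omega> \<noteq> 0} = \<alpha>"
  defines "R \<equiv> 6 * D + \<sigma>"
    and "lam \<equiv> (1 - \<alpha>) * \<rho>"
    and "C \<equiv> (1 - \<alpha>) * \<rho> / 2"
    and "P \<equiv> distr M borel (\<lambda>\<omega>. (X \<omega>, wstar \<bullet> X \<omega> + Eps \<omega> + B \<omega>))"
    and "mu \<equiv> (\<lambda>s::nat \<Rightarrow> (real^'n) \<times> real. (1 / real T) *\<^sub>R (\<Sum>i<T. fst (s i)))"
    and "wbar \<equiv> (\<lambda>s::nat \<Rightarrow> (real^'n) \<times> real. (2 / real T) *\<^sub>R
           (\<Sum>t\<in>{T div 2 + 1..T}. sgd_iter D (6 * D + \<sigma>) ((1 - \<alpha>) * \<rho>)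
             ((1 / real T) *\<^sub>R (\<Sum>i<T. fst (s i))) (\<lambda>t. s (T + t - 1)) (t - 1)))"
    and "L \<equiv> (\<lambda>(w::real^'n) (m::real^'n). integral\<^sup>L M (\<lambda>\<omega>.
           huber (6 * D + \<sigma>) ((w - wstar) \<bullet> (X \<omega> - m) - wstar \<bullet> m - Eps \<omega> - B \<omega>)))"
    and "Ltil \<equiv> (\<lambda>(w::real^'n) (m::real^'n). integral\<^sup>L M (\<lambda>\<omega>.
           huber (6 * D + \<sigma>) ((w - wstar) \<bullet> (X \<omega> - integral\<^sup>L M X) - wstar \<bullet> m - Eps \<omega> - B \<omega>)))"
  shows "(\<integral>s. (Ltil (wbar s) (mu s) - L (wbar s) (mu s)) \<partial>(PiM {..<2*T} (\<lambda>_. P)))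
         \<le> C / 2 * (\<integral>s. (norm (wbar s - wstar))\<^sup>2 \<partial>(PiM {..<2*T} (\<lambda>_. P)))
           + 2 * R\<^sup>2 / C * ((36 * ln (real T) + 4) / real T)"
proof -
  note assms' = assms
  interpret Mp: prob_space M by fact
  have Dpos: "D > 0" and sig: "\<sigma> \<ge> 0" and a1: "\<alpha> < 1" and rho: "\<rho> > 0" and Tpos: "T > 0" and ev: "even T"
    using assms(2,3,5,6,7,8) by auto
  have Xm[measurable]: "X \<in> borel_measurable M" and Em[measurable]: "Eps \<in> borel_measurable M"
    and Bm[measurable]: "B \<in> borel_measurable M" using assms(10,11,12) by auto
  have Rpos: "R > 0" unfolding R_def using Dpos sig by simp
  have Cpos: "C > 0" unfolding C_def using a1 rho by simp
  define m0 where "m0 = integral\<^sup>L M X"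
  define g where "g \<omega> = (X \<omega>, wstar \<bullet> X \<omega> + Eps \<omega> + B \<omega>)" for \<omega>
  have gm: "g \<in> borel_measurable M" unfolding g_def by (rule borel_measurable_Pair) measurable
  have Pg: "P = distr M borel g" unfolding P_def g_def by simp
  have Pp: "prob_space P" unfolding Pg using gm by (intro Mp.prob_space_distr)
  have sP: "sets P = sets borel" unfolding Pg by simp
  have Pbd: "AE z in P. norm (fst z) \<le> 1"
    unfolding Pg using assms(14) by (intro AE_fst_distr[OF gm]) (simp add: g_def)
  have m0P: "m0 = integral\<^sup>L P fst"
    unfolding Pg m0_def by (subst integral_distr[OF gm fst_borel]) (simp add: g_def)
  define Q where "Q = PiM {..<2*T} (\<lambda>_. P)"
  have Qp: "prob_space Q" unfolding Q_def using Pp by (intro prob_space_PiM) auto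
  interpret Qp: prob_space Q by fact
  have comp: "(\<lambda>s. s i) \<in> borel_measurable Q" if "i < 2*T" for i
  proof -
    have "(\<lambda>s. s i) \<in> measurable Q P" unfolding Q_def using that by (intro measurable_component_singleton) auto
    then show ?thesis using measurable_cong_sets[OF refl sP] by blast
  qed
  have compf: "(\<lambda>s. fst (s i)) \<in> borel_measurable Q" if "i < 2*T" for i
    using measurable_compose[OF comp[OF that] fst_borel] by simp
  have mum: "mu \<in> borel_measurable Q"
  proof -
    have "(\<lambda>s. \<Sum>i<T. fst (s i)) \<in> borel_measurable Q"
      by (intro borel_measurable_sum compf) auto
    then show ?thesis unfolding mu_def by measurable
  qed
  have sgdm: "(\<lambda>s. sgd_iter D (6 * D + \<sigma>) ((1 - \<alpha>) * \<rho>) (mu s) (\<lambda>t. s (T + t - 1)) k) \<in> borel_measurable Q"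
    if "k \<le> T" for k
    by (rule sgd_meas[OF _ mum that]) (rule comp, simp)
  have wbar_eq: "wbar s = (2 / real T) *\<^sub>R (\<Sum>t\<in>{T div 2 + 1..T}. sgd_iter D (6 * D + \<sigma>) ((1 - \<alpha>) * \<rho>) (mu s) (\<lambda>t. s (T + t - 1)) (t - 1))" for s
    unfolding wbar_def mu_def by simp
  have wbm: "wbar \<in> borel_measurable Q"
  proof -
    have "(\<lambda>s. \<Sum>t\<in>{T div 2 + 1..T}. sgd_iter D (6 * D + \<sigma>) ((1 - \<alpha>) * \<rho>) (mu s) (\<lambda>t. s (T + t - 1)) (t - 1)) \<in> borel_measurable Q"
      by (intro borel_measurable_sum sgdm) auto
    then show ?thesis unfolding wbar_eq[abs_def] by measurable
  qed
  have card: "card {T div 2 + 1..T} = T div 2" using ev by auto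
  have wbn: "norm (wbar s) \<le> D" for s
  proof -
    have "norm (\<Sum>t\<in>{T div 2 + 1..T}. sgd_iter D (6 * D + \<sigma>) ((1 - \<alpha>) * \<rho>) (mu s) (\<lambda>t. s (T + t - 1)) (t - 1))
       \<le> (\<Sum>t\<in>{T div 2 + 1..T}. D)"
      using Dpos by (intro norm_sum[THEN order_trans] sum_mono sgd_norm) auto
    also have "\<dots> = real (T div 2) * D" using card by simp
    finally have "norm (wbar s) \<le> (2 / real T) * (real (T div 2) * D)"
      unfolding wbar_eq using Tpos by (simp add: divide_right_mono)
    also have "\<dots> = D" using ev Tpos by (auto elim!: evenE)
    finally show ?thesis .
  qed
  have wsn: "norm (wbar s - wstar) \<le> 2 * D" for s
    using norm_triangle_ineq4[of "wbar s" wstar] wbn[of s] assms(9) by linarith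
  have Ai: "integrable Q (\<lambda>s. (norm (wbar s - wstar))\<^sup>2)"
  proof (rule Qp.integrable_const_bound[where B="(2*D)\<^sup>2"])
    show "AE s in Q. norm ((norm (wbar s - wstar))\<^sup>2) \<le> (2*D)\<^sup>2"
    proof (intro AE_I2)
      fix s
      have "(norm (wbar s - wstar))\<^sup>2 \<le> (2*D)\<^sup>2" using wsn[of s] by (intro power_mono) auto
      then show "norm ((norm (wbar s - wstar))\<^sup>2) \<le> (2*D)\<^sup>2" by simp
    qed
    show "(\<lambda>s. (norm (wbar s - wstar))\<^sup>2) \<in> borel_measurable Q" using wbm by measurable
  qed
  have Bi: "integrable Q (\<lambda>s. (norm (mu s - m0))\<^sup>2)"
    and Bb: "(\<integral>s. (norm (mu s - m0))\<^sup>2 \<partial>Q) \<le> 4 / real T"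
    using var_bound[OF Pp sP Pbd m0P Tpos, of "2*T"] unfolding Q_def mu_def by auto
  define F where "F s = Ltil (wbar s) (mu s) - L (wbar s) (mu s)" for s
  define G where "G s = C / 2 * (norm (wbar s - wstar))\<^sup>2 + R\<^sup>2 / (2 * C) * (norm (mu s - m0))\<^sup>2" for s
  have FG: "F s \<le> G s" for s
  proof -
    define w where "w = wbar s"
    define m where "m = mu s"
    define f where "f \<omega> = (w - wstar) \<bullet> (X \<omega> - m) - wstar \<bullet> m - Eps \<omega> - B \<omega>" for \<omega>
    define \<delta> where "\<delta> = (w - wstar) \<bullet> (m - m0)"
    have fm: "f \<in> borel_measurable M" unfolding f_def by measurable
    have e1: "L w m = (\<integral>\<omega>. huber R (f \<omega>) \<partial>M)" unfolding L_def f_def R_def by simp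
    have e2: "Ltil w m = (\<integral>\<omega>. huber R (f \<omega> + \<delta>) \<partial>M)" unfolding Ltil_def f_def R_def \<delta>_def m0_def
      by (simp add: inner_diff_right algebra_simps)
    have "F s \<le> R * \<bar>\<delta>\<bar>" unfolding F_def w_def[symmetric] m_def[symmetric] e1 e2
      using huber_int_diff[OF assms(1) fm, of R \<delta>] Rpos by simp
    also have "\<bar>\<delta>\<bar> \<le> norm (w - wstar) * norm (m - m0)" unfolding \<delta>_def by (rule Cauchy_Schwarz_ineq2)
    then have "R * \<bar>\<delta>\<bar> \<le> R * (norm (w - wstar) * norm (m - m0))" using Rpos by (intro mult_left_mono) auto
    also have "\<dots> \<le> G s"
    proof -
      define a where "a = norm (w - wstar)"
      define b where "b = norm (m - m0)"
      have "0 \<le> (C * a - R * b)\<^sup>2 / (2 * C)" using Cpos by simp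
      also have "(C * a - R * b)\<^sup>2 / (2 * C) = C / 2 * a\<^sup>2 + R\<^sup>2 / (2 * C) * b\<^sup>2 - R * (a * b)"
        using Cpos by (simp add: power2_eq_square field_simps)
      finally show ?thesis unfolding G_def a_def b_def w_def m_def by simp
    qed
    finally show ?thesis .
  qed
  have Gi: "integrable Q G" unfolding G_def using Ai Bi by auto
  have IG: "integral\<^sup>L Q G = C / 2 * (\<integral>s. (norm (wbar s - wstar))\<^sup>2 \<partial>Q) + R\<^sup>2 / (2 * C) * (\<integral>s. (norm (mu s - m0))\<^sup>2 \<partial>Q)"
    unfolding G_def using Ai Bi by simp
  have lnT: "ln (real T) \<ge> 0" using Tpos by simp
  have last: "R\<^sup>2 / (2 * C) * (4 / real T) \<le> 2 * R\<^sup>2 / C * ((36 * ln (real T) + 4) / real T)"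
  proof -
    have "R\<^sup>2 / (2 * C) * (4 / real T) = 2 * R\<^sup>2 / C * (1 / real T)" by (simp add: field_simps)
    also have "\<dots> \<le> 2 * R\<^sup>2 / C * ((36 * ln (real T) + 4) / real T)"
      using lnT Cpos Tpos by (intro mult_left_mono divide_right_mono) auto
    finally show ?thesis .
  qed
  have Anon: "(\<integral>s. (norm (wbar s - wstar))\<^sup>2 \<partial>Q) \<ge> 0" by simp
  have RHS0: "0 \<le> C / 2 * (\<integral>s. (norm (wbar s - wstar))\<^sup>2 \<partial>Q) + 2 * R\<^sup>2 / C * ((36 * ln (real T) + 4) / real T)"
    using Anon Cpos lnT Tpos by auto
  show ?thesis
  proof (cases "integrable Q F")
    case True
    have "integral\<^sup>L Q F \<le> integral\<^sup>L Q G" using True Gi FG by (intro integral_mono) auto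
    also have "\<dots> \<le> C / 2 * (\<integral>s. (norm (wbar s - wstar))\<^sup>2 \<partial>Q) + R\<^sup>2 / (2 * C) * (4 / real T)"
      unfolding IG using Bb Cpos by (intro add_left_mono mult_left_mono) auto
    also have "\<dots> \<le> C / 2 * (\<integral>s. (norm (wbar s - wstar))\<^sup>2 \<partial>Q) + 2 * R\<^sup>2 / C * ((36 * ln (real T) + 4) / real T)"
      using last by simp
    finally show ?thesis unfolding Q_def[symmetric] F_def[symmetric] by simp
  next
    case False
    then have "integral\<^sup>L Q F = 0" by (rule not_integrable_integral_eq)
    then show ?thesis using RHS0 unfolding Q_def[symmetric] F_def[symmetric] by simp
  qed
qed

end
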